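(* There exist a nondeterministic planning domain $D$, a finite-state policy $f$, and an LTL$_f$ formula $\psi$ such that $(D,f)\models A^{=1}(\psi)$, but there is no policy $g$ with $(D,g)\models A^{\text{sa-fair}}(\psi)$.
   Context: A nondeterministic planning domain is a tuple $D=(St,Act,s_0,Tr)$ with $St=2^{\mathcal{F}}$ a finite set of states (assignments to Boolean fluents $\mathcal{F}$), $Act=2^{\mathcal{A}}$ a finite set of actions, initial state $s_0$, and transition relation $Tr\subseteq St\times Act\times St$; every state has an applicable action ($a$ is applicable in $s$ if some $(s,a,s')\in Tr$). A trace is a finite or infinite sequence $(s_0\cup a_0)(s_1\cup a_1)\cdots$ over $2^{\mathcal{F}\cup\mathcal{A}}$ starting at $s_0$ with $(s_{i-1},a_{i-1},s_i)\in Tr$. A policy is a function $f:St^+\to Act$ with $f(u)$ applicable in the last state of $u$; a trace is an $f$-trace if $f(s_0\cdots s_i)=a_i$ for every prefix; a finite-state policy is one computed by a finite-state input/output automaton. LTL$_f$ is LTL (atoms, $\neg$, $\wedge$, next $X$, until $U$) interpreted over finite sequences over $2^{\mathcal{F}\cup\mathcal{A}}$, where $X\psi$ holds at $j$ only if $j+1$ is a position of the sequence; an infinite trace satisfies an LTL$_f$ formula if some finite prefix does. An infinite trace is state-action fair if for every $(s,a,s')\in Tr$, if $s,a$ occurs infinitely often then $s,a$ immediately followed by $s'$ occurs infinitely often. $(D,f)\models A^{\text{sa-fair}}\psi$ means every infinite state-action fair $f$-trace satisfies $\psi$. $(D,f)\models A^{=1}\psi$ means that, in any stochastic domain whose transition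 distributions $Pr(s,a)$ have support exactly $Tr(s,a)$, the infinite $f$-traces satisfying $\psi$ have probability $1$ under the Markov chain induced by $D$ and $f$ (this is independent of the choice of such probabilities). *)

theory Defs
  imports "HOL-Probability.Probability"
begin

text \<open>Fluents and action propositions are both drawn from one proposition type 'p;
  they are required to be disjoint, so that a letter s \<union> a over 2^(F \<union> A) determines s and a.\<close>

record 'p domain =
  fluents :: "'p set"
  actions :: "'p set"
  init    :: "'p set"
  trans   :: "('p set \<times> 'p set \<times> 'p set) set"

definition states :: "'p domain \<Rightarrow> 'p set set" where
  "states D = Pow (fluents D)"

definition acts :: "'p domain \<Rightarrow> 'p set set" where
  "acts D = Pow (actions D)"

definition applicable :: "'p domain \<Rightarrow> 'p set \<Rightarrow> 'p set \<Rightarrow> bool" where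
  "applicable D s a \<longleftrightarrow> (\<exists>s'. (s, a, s') \<in> trans D)"

definition planning_domain :: "'p domain \<Rightarrow> bool" where
  "planning_domain D \<longleftrightarrow>
     finite (fluents D) \<and> finite (actions D) \<and> fluents D \<inter> actions D = {} \<and>
     init D \<in> states D \<and>
     trans D \<subseteq> states D \<times> acts D \<times> states D \<and>
     (\<forall>s\<in>states D. \<exists>a. applicable D s a)"

definition is_policy :: "'p domain \<Rightarrow> ('p set list \<Rightarrow> 'p set) \<Rightarrow> bool" where
  "is_policy D f \<longleftrightarrow>
     (\<forall>u. u \<noteq> [] \<and> set u \<subseteq> states D \<longrightarrow> applicable D (last u) (f u))"

text \<open>Finite-state policy: computed by a finite-state input/output (Mealy) automaton
  with states Q, initial state q0, transition function delta reading domain states,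
  and output function out: the action on history s0...si is out (state after reading
  s0...s(i-1)) si.\<close>

definition finite_state_policy :: "'p domain \<Rightarrow> ('p set list \<Rightarrow> 'p set) \<Rightarrow> bool" where
  "finite_state_policy D f \<longleftrightarrow> is_policy D f \<and>
     (\<exists>(Q :: nat set) q0 (delta :: nat \<Rightarrow> 'p set \<Rightarrow> nat) (out :: nat \<Rightarrow> 'p set \<Rightarrow> 'p set).
        finite Q \<and> q0 \<in> Q \<and> (\<forall>q\<in>Q. \<forall>s\<in>states D. delta q s \<in> Q) \<and>
        (\<forall>u. u \<noteq> [] \<and> set u \<subseteq> states D \<longrightarrow> f u = out (foldl delta q0 (butlast u)) (last u)))"

definition is_f_trace :: "'p domain \<Rightarrow> ('p set list \<Rightarrow> 'p set) \<Rightarrow> (nat \<Rightarrow> 'p set) \<Rightarrow> (nat \<Rightarrow> 'p set) \<Rightarrow> bool" where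
  "is_f_trace D f ss as \<longleftrightarrow>
     ss 0 = init D \<and>
     (\<forall>i. (ss i, as i, ss (Suc i)) \<in> trans D) \<and>
     (\<forall>i. as i = f (map ss [0..<Suc i]))"

definition sa_fair :: "'p domain \<Rightarrow> (nat \<Rightarrow> 'p set) \<Rightarrow> (nat \<Rightarrow> 'p set) \<Rightarrow> bool" where
  "sa_fair D ss as \<longleftrightarrow>
     (\<forall>s a s'. (s, a, s') \<in> trans D \<longrightarrow>
        (\<exists>\<^sub>\<infinity> i. ss i = s \<and> as i = a) \<longrightarrow>
        (\<exists>\<^sub>\<infinity> i. ss i = s \<and> as i = a \<and> ss (Suc i) = s'))"

datatype 'p ltlf =
    Atom 'p
  | Neg "'p ltlf"
  | Conj "'p ltlf" "'p ltlf"
  | Next "'p ltlf"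
  | Until "'p ltlf" "'p ltlf"

fun ltlf_atoms :: "'p ltlf \<Rightarrow> 'p set" where
  "ltlf_atoms (Atom p) = {p}"
| "ltlf_atoms (Neg \<phi>) = ltlf_atoms \<phi>"
| "ltlf_atoms (Conj \<phi> \<psi>) = ltlf_atoms \<phi> \<union> ltlf_atoms \<psi>"
| "ltlf_atoms (Next \<phi>) = ltlf_atoms \<phi>"
| "ltlf_atoms (Until \<phi> \<psi>) = ltlf_atoms \<phi> \<union> ltlf_atoms \<psi>"

fun ltlf_sat :: "'p set list \<Rightarrow> nat \<Rightarrow> 'p ltlf \<Rightarrow> bool" where
  "ltlf_sat w j (Atom p) \<longleftrightarrow> p \<in> w ! j"
| "ltlf_sat w j (Neg \<phi>) \<longleftrightarrow> \<not> ltlf_sat w j \<phi>"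
| "ltlf_sat w j (Conj \<phi> \<psi>) \<longleftrightarrow> ltlf_sat w j \<phi> \<and> ltlf_sat w j \<psi>"
| "ltlf_sat w j (Next \<phi>) \<longleftrightarrow> Suc j < length w \<and> ltlf_sat w (Suc j) \<phi>"
| "ltlf_sat w j (Until \<phi> \<psi>) \<longleftrightarrow>
     (\<exists>k. j \<le> k \<and> k < length w \<and> ltlf_sat w k \<psi> \<and> (\<forall>i. j \<le> i \<and> i < k \<longrightarrow> ltlf_sat w i \<phi>))"

definition ltlf_models :: "'p set list \<Rightarrow> 'p ltlf \<Rightarrow> bool" where
  "ltlf_models w \<phi> \<longleftrightarrow> w \<noteq> [] \<and> ltlf_sat w 0 \<phi>"

definition inf_sat :: "(nat \<Rightarrow> 'p set) \<Rightarrow> (nat \<Rightarrow> 'p set) \<Rightarrow> 'p ltlf \<Rightarrow> bool" where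
  "inf_sat ss as \<phi> \<longleftrightarrow> (\<exists>n. ltlf_models (map (\<lambda>i. ss i \<union> as i) [0..<Suc n]) \<phi>)"

definition A_sa_fair :: "'p domain \<Rightarrow> ('p set list \<Rightarrow> 'p set) \<Rightarrow> 'p ltlf \<Rightarrow> bool" where
  "A_sa_fair D f \<phi> \<longleftrightarrow>
     (\<forall>ss as. is_f_trace D f ss as \<and> sa_fair D ss as \<longrightarrow> inf_sat ss as \<phi>)"

definition stoch_instance :: "'p domain \<Rightarrow> ('p set \<Rightarrow> 'p set \<Rightarrow> 'p set pmf) \<Rightarrow> bool" where
  "stoch_instance D Pr \<longleftrightarrow>
     (\<forall>s\<in>states D. \<forall>a. applicable D s a \<longrightarrow> set_pmf (Pr s a) = {s'. (s, a, s') \<in> trans D})"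

text \<open>The Markov chain induced by D, Pr and a (history-dependent) policy f is realised
  as follows: for every history h an independent successor rho h ~ Pr (last h) (f h)
  is sampled (infinite product measure); the run then follows these samples.  The law of
  the resulting state/action sequence is exactly that of the induced Markov chain.\<close>

primrec run_hist :: "'p domain \<Rightarrow> ('p set list \<Rightarrow> 'p set) \<Rightarrow> nat \<Rightarrow> 'p set list" where
  "run_hist D rho 0 = [init D]"
| "run_hist D rho (Suc n) = run_hist D rho n @ [rho (run_hist D rho n)]"

definition induced_chain ::
  "('p set \<Rightarrow> 'p set \<Rightarrow> 'p set pmf) \<Rightarrow> ('p set list \<Rightarrow> 'p set) \<Rightarrow> ('p set list \<Rightarrow> 'p set) measure" where
  "induced_chain Pr f = (\<Pi>\<^sub>M h\<in>UNIV. measure_pmf (Pr (last h) (f h)))"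

definition A_prob1 :: "'p domain \<Rightarrow> ('p set list \<Rightarrow> 'p set) \<Rightarrow> 'p ltlf \<Rightarrow> bool" where
  "A_prob1 D f \<phi> \<longleftrightarrow>
     (\<forall>Pr. stoch_instance D Pr \<longrightarrow>
        (AE rho in induced_chain Pr f.
           inf_sat (\<lambda>i. last (run_hist D rho i)) (\<lambda>i. f (run_hist D rho i)) \<phi>))"

end

theory Submission
  imports Defs
begin

definition D0 :: "nat domain" where
  "D0 = \<lparr> fluents = {0}, actions = {1}, init = {}, trans = Pow {0} \<times> {{}} \<times> Pow {0} \<rparr>"

definition f0 :: "nat set list \<Rightarrow> nat set" where "f0 = (\<lambda>_. {})"

definition Or :: "nat ltlf \<Rightarrow> nat ltlf \<Rightarrow> nat ltlf" where
  "Or a b = Neg (Conj (Neg a) (Neg b))"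

definition TT :: "nat ltlf" where "TT = Neg (Conj (Atom 0) (Neg (Atom 0)))"

definition psi :: "nat ltlf" where
  "psi = Or (Until TT (Or (Conj (Atom 0) (Next (Next (Atom 0))))
                          (Conj (Neg (Atom 0)) (Next (Next (Neg (Atom 0)))))))
            (Next (Atom 0))"

definition P :: "nat \<Rightarrow> nat set" where "P n = (if n mod 4 < 2 then {} else {0})"

definition hP :: "nat \<Rightarrow> nat set list" where "hP n = map P [0..<Suc n]"

lemma states_D0: "states D0 = {{},{0}}"
  unfolding states_def D0_def by auto

lemma trans_D0: "trans D0 = {{},{0}} \<times> {{}} \<times> {{},{0}}"
  unfolding D0_def by auto

lemma applicable_D0: "applicable D0 s a \<longleftrightarrow> s \<in> {{},{0}} \<and> a = {}"
  unfolding applicable_def trans_D0 by auto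

lemma sat_psi:
  "ltlf_sat w 0 psi \<longleftrightarrow> (\<exists>k. k+2 < length w \<and> (0 \<in> w!k \<longleftrightarrow> 0 \<in> w!(k+2))) \<or> (1 < length w \<and> 0 \<in> w!1)"
proof -
  have e: "\<And>k. ltlf_sat w k (Conj (Atom 0) (Next (Next (Atom 0)))) \<longleftrightarrow> 0 \<in> w!k \<and> k+2 < length w \<and> 0 \<in> w!(k+2)"
    by auto
  have e2: "\<And>k. ltlf_sat w k (Conj (Neg (Atom 0)) (Next (Next (Neg (Atom 0))))) \<longleftrightarrow> 0 \<notin> w!k \<and> k+2 < length w \<and> 0 \<notin> w!(k+2)"
    by auto
  show ?thesis
    unfolding psi_def Or_def TT_def ltlf_sat.simps(2,3) e e2 by (auto; metis Suc_lessD)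
qed

lemma inf_sat_psi:
  "inf_sat ss as psi \<longleftrightarrow> (\<exists>k. (0 \<in> ss k \<union> as k) = (0 \<in> ss (k+2) \<union> as (k+2))) \<or> 0 \<in> ss 1 \<union> as 1"
proof
  assume "inf_sat ss as psi"
  then obtain n where "ltlf_models (map (\<lambda>i. ss i \<union> as i) [0..<Suc n]) psi"
    unfolding inf_sat_def by blast
  then show "(\<exists>k. (0 \<in> ss k \<union> as k) = (0 \<in> ss (k+2) \<union> as (k+2))) \<or> 0 \<in> ss 1 \<union> as 1"
    unfolding ltlf_models_def sat_psi length_map length_upt
  proof (elim conjE disjE exE)
    fix k assume k: "k + 2 < Suc n - 0"
      "(0 \<in> map (\<lambda>i. ss i \<union> as i) [0..<Suc n] ! k) = (0 \<in> map (\<lambda>i. ss i \<union> as i) [0..<Suc n] ! (k + 2))"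
    have "map (\<lambda>i. ss i \<union> as i) [0..<Suc n] ! k = ss k \<union> as k"
      using k(1) by (subst nth_map_upt) auto
    moreover have "map (\<lambda>i. ss i \<union> as i) [0..<Suc n] ! (k+2) = ss (k+2) \<union> as (k+2)"
      using k(1) by (subst nth_map_upt) auto
    ultimately show ?thesis using k(2) by blast
  next
    assume a: "1 < Suc n - 0" "0 \<in> map (\<lambda>i. ss i \<union> as i) [0..<Suc n] ! 1"
    have "map (\<lambda>i. ss i \<union> as i) [0..<Suc n] ! 1 = ss 1 \<union> as 1"
      using a(1) by (subst nth_map_upt) auto
    then show ?thesis using a(2) by simp
  qed
next
  assume "(\<exists>k. (0 \<in> ss k \<union> as k) = (0 \<in> ss (k+2) \<union> as (k+2))) \<or> 0 \<in> ss 1 \<union> as 1"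
  then show "inf_sat ss as psi"
  proof
    assume "\<exists>k. (0 \<in> ss k \<union> as k) = (0 \<in> ss (k+2) \<union> as (k+2))"
    then obtain k where k: "(0 \<in> ss k \<union> as k) = (0 \<in> ss (k+2) \<union> as (k+2))" by blast
    have "ltlf_models (map (\<lambda>i. ss i \<union> as i) [0..<Suc (k+2)]) psi"
      unfolding ltlf_models_def sat_psi
      apply (rule conjI, simp)
      apply (rule disjI1, rule exI[of _ k])
      using k by (simp del: upt_Suc add: nth_map_upt)
    then show ?thesis unfolding inf_sat_def by blast
  next
    assume a: "0 \<in> ss 1 \<union> as 1"
    have "ltlf_models (map (\<lambda>i. ss i \<union> as i) [0..<Suc 1]) psi"
      unfolding ltlf_models_def sat_psi using a by simp
    then show ?thesis unfolding inf_sat_def by blast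
  qed
qed

lemma P_in: "P n \<in> {{},{0}}" unfolding P_def by auto

lemma P_alt: "(0 \<in> P n) \<noteq> (0 \<in> P (n+2))"
proof -
  have "(n+2) mod 4 < 2 \<longleftrightarrow> \<not> (n mod 4 < 2)" by presburger
  then show ?thesis unfolding P_def by auto
qed


lemma length_hP[simp]: "length (hP n) = Suc n" by (simp add: hP_def)
lemma last_hP[simp]: "last (hP n) = P n" by (simp add: hP_def del: upt_Suc) (simp)
lemma hP_Suc: "hP (Suc n) = hP n @ [P (Suc n)]" by (simp add: hP_def)
lemma hP_ne[simp]: "hP n \<noteq> []" by (simp add: hP_def)
lemma set_hP: "set (hP n) \<subseteq> {{},{0}}" using P_in by (auto simp: hP_def)

lemma pd: "planning_domain D0"
  unfolding planning_domain_def states_D0 applicable_D0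
  by (auto simp: D0_def acts_def)

lemma fsp: "finite_state_policy D0 f0"
  unfolding finite_state_policy_def
proof
  show "is_policy D0 f0"
    unfolding is_policy_def applicable_D0 f0_def states_D0
    by (auto dest!: last_in_set)
  show "\<exists>(Q :: nat set) q0 (delta :: nat \<Rightarrow> nat set \<Rightarrow> nat) (out :: nat \<Rightarrow> nat set \<Rightarrow> nat set).
        finite Q \<and> q0 \<in> Q \<and> (\<forall>q\<in>Q. \<forall>s\<in>states D0. delta q s \<in> Q) \<and>
        (\<forall>u. u \<noteq> [] \<and> set u \<subseteq> states D0 \<longrightarrow> f0 u = out (foldl delta q0 (butlast u)) (last u))"
    by (rule exI[of _ "{0}"], rule exI[of _ 0], rule exI[of _ "\<lambda>_ _. 0"], rule exI[of _ "\<lambda>_ _. {}"])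
       (simp add: f0_def)
qed

lemma infm_mod4: "r < 4 \<Longrightarrow> \<exists>\<^sub>\<infinity> i::nat. i mod 4 = r"
  unfolding INFM_nat
proof (intro allI)
  fix m assume "r < 4"
  show "\<exists>n>m. n mod 4 = r"
    by (rule exI[of _ "4*(m+1)+r"]) (use \<open>r<4\<close> in presburger)
qed

lemma m0: "i mod 4 = 0 \<Longrightarrow> P i = {} \<and> P (Suc i) = {}"
proof -
  assume "i mod 4 = 0" then have "Suc i mod 4 = 1" by presburger
  then show ?thesis using \<open>i mod 4 = 0\<close> by (simp add: P_def)
qed
lemma m1: "i mod 4 = 1 \<Longrightarrow> P i = {} \<and> P (Suc i) = {0}"
proof -
  assume "i mod 4 = 1" then have "Suc i mod 4 = 2" by presburger
  then show ?thesis using \<open>i mod 4 = 1\<close> by (simp add: P_def)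
qed
lemma m2: "i mod 4 = 2 \<Longrightarrow> P i = {0} \<and> P (Suc i) = {0}"
proof -
  assume "i mod 4 = 2" then have "Suc i mod 4 = 3" by presburger
  then show ?thesis using \<open>i mod 4 = 2\<close> by (simp add: P_def)
qed
lemma m3: "i mod 4 = 3 \<Longrightarrow> P i = {0} \<and> P (Suc i) = {}"
proof -
  assume "i mod 4 = 3" then have "Suc i mod 4 = 0" by presburger
  then show ?thesis using \<open>i mod 4 = 3\<close> by (simp add: P_def)
qed
lemma key_mod: "s \<in> {{},{0::nat}} \<Longrightarrow> s' \<in> {{},{0}} \<Longrightarrow> \<exists>r<4. \<forall>i. i mod 4 = r \<longrightarrow> P i = s \<and> P (Suc i) = s'"
proof -
  assume a: "s \<in> {{},{0::nat}}" "s' \<in> {{},{0}}"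
  have c: "(s = {} \<and> s' = {}) \<or> (s = {} \<and> s' = {0}) \<or> (s = {0} \<and> s' = {0}) \<or> (s = {0} \<and> s' = {})"
    using a by blast
  show ?thesis
  proof -
    { assume "s = {} \<and> s' = {}" then have ?thesis using m0 by (intro exI[of _ 0]) auto }
    moreover { assume "s = {} \<and> s' = {0}" then have ?thesis using m1 by (intro exI[of _ 1]) auto }
    moreover { assume "s = {0} \<and> s' = {0}" then have ?thesis using m2 by (intro exI[of _ 2]) auto }
    moreover { assume "s = {0} \<and> s' = {}" then have ?thesis using m3 by (intro exI[of _ 3]) auto }
    ultimately show ?thesis using c by blast
  qed
qed

lemma no_fair: "\<not> (\<exists>g. is_policy D0 g \<and> A_sa_fair D0 g psi)"
proof
  assume "\<exists>g. is_policy D0 g \<and> A_sa_fair D0 g psi"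
  then obtain g where g: "is_policy D0 g" "A_sa_fair D0 g psi" by blast
  have gu: "g (map P [0..<Suc i]) = {}" for i
  proof -
    have "applicable D0 (last (hP i)) (g (hP i))"
      using spec[OF g(1)[unfolded is_policy_def], of "hP i"] set_hP[of i] by (simp add: states_D0)
    then show ?thesis unfolding applicable_D0 hP_def by simp
  qed
  have tr: "is_f_trace D0 g P (\<lambda>_. {})"
  proof -
    have "P 0 = {}" by (simp add: P_def)
    moreover have pin: "\<And>n. P n = {} \<or> P n = {0}" using P_in by blast
    ultimately show ?thesis unfolding is_f_trace_def trans_D0 using gu by (simp add: D0_def) (meson pin)
  qed
  have fair: "sa_fair D0 P (\<lambda>_. {})"
    unfolding sa_fair_def trans_D0
  proof (intro allI impI)
    fix s a s' :: "nat set" assume "(s, a, s') \<in> {{}, {0}} \<times> {{}} \<times> {{}, {0}}"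
    then have cs: "a = {}" "s \<in> {{},{0}}" "s' \<in> {{},{0}}" by auto
    have key: "\<exists>r<4. \<forall>i. i mod 4 = r \<longrightarrow> P i = s \<and> P (Suc i) = s'"
      using key_mod cs(2,3) by blast
    then obtain r where r: "r < 4" "\<And>i. i mod 4 = r \<Longrightarrow> P i = s \<and> P (Suc i) = s'" by blast
    show "\<exists>\<^sub>\<infinity> i. P i = s \<and> {} = a \<and> P (Suc i) = s'"
      using infm_mod4[OF r(1)] by (rule INFM_mono) (use r cs in auto)
  qed
  have "inf_sat P (\<lambda>_. {}) psi" using g(2) tr fair unfolding A_sa_fair_def by blast
  moreover have "0 \<notin> P 1 \<union> {}" by (simp add: P_def)
  moreover have "(0 \<in> P k \<union> {}) \<noteq> (0 \<in> P (k+2) \<union> {})" for k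
    using P_alt[of k] by simp
  ultimately show False unfolding inf_sat_psi by blast
qed


lemma pmf_lt1: "z \<in> set_pmf p \<Longrightarrow> z \<noteq> y \<Longrightarrow> pmf p y < 1"
proof -
  assume z: "z \<in> set_pmf p" "z \<noteq> y"
  have "pmf p y = measure_pmf.prob p {y}" by (simp add: measure_pmf_single)
  also have "\<dots> \<le> measure_pmf.prob p (UNIV - {z})"
    using z by (intro measure_pmf.finite_measure_mono) auto
  also have "\<dots> = 1 - pmf p z"
    using measure_pmf.prob_compl[of "{z}" p] by (simp add: measure_pmf_single)
  also have "\<dots> < 1" using pmf_positive[OF z(1)] by simp
  finally show ?thesis .
qed

lemma det_run:
  assumes st: "\<And>n. rho (hP n) \<in> {{},{0}}"
    and alt: "\<And>k. (0 \<in> last (run_hist D0 rho k)) \<noteq> (0 \<in> last (run_hist D0 rho (k+2)))"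
    and one: "0 \<notin> last (run_hist D0 rho 1)"
  shows "run_hist D0 rho n = hP n"
proof (induction n rule: less_induct)
  case (less n)
  show ?case
  proof (cases n)
    case 0
    then show ?thesis by (simp add: hP_def D0_def P_def)
  next
    case (Suc m)
    have IH: "run_hist D0 rho m = hP m" using less Suc by simp
    have r: "rho (hP m) = P (Suc m)"
    proof (cases m)
      case 0
      have "0 \<notin> rho (hP 0)" using one IH 0 by simp
      then show ?thesis using st[of 0] 0 by (auto simp: P_def)
    next
      case (Suc j)
      have IHj: "run_hist D0 rho j = hP j" using less.IH \<open>n = Suc m\<close> Suc by simp
      have "(0 \<in> P j) \<noteq> (0 \<in> rho (hP m))"
        using alt[of j] IHj IH Suc by simp
      then show ?thesis using P_alt[of j] P_in[of "j+2"] st[of m] Suc by auto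
    qed
    show ?thesis using IH r Suc by (simp add: hP_Suc)
  qed
qed


lemma prob1: "A_prob1 D0 f0 psi"
  unfolding A_prob1_def
proof (intro allI impI)
  fix Pr assume si: "stoch_instance D0 Pr"
  define M where "M = (\<lambda>h. measure_pmf (Pr (last h) (f0 h)))"
  have ic: "induced_chain Pr f0 = PiM UNIV M" unfolding induced_chain_def M_def by simp
  have psM: "prob_space (M i)" for i unfolding M_def by (rule prob_space_measure_pmf)
  interpret product_prob_space M UNIV
    by (intro product_prob_space.intro product_sigma_finite.intro product_prob_space_axioms.intro prob_space_imp_sigma_finite psM)
  have sp: "set_pmf (Pr x {}) = {{},{0}}" if "x \<in> {{},{0}}" for x
  proof -
    have "set_pmf (Pr x {}) = {s'. (x, {}, s') \<in> trans D0}"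
      using si that unfolding stoch_instance_def states_D0 applicable_D0 by blast
    also have "{s'. (x, {}, s') \<in> trans D0} = {{},{0}}"
      using that unfolding trans_D0 by blast
    finally show ?thesis .
  qed
  have spM: "set_pmf (Pr (last (hP n)) (f0 (hP n))) = {{},{0}}" for n
    using sp[OF P_in[of n]] by (simp add: f0_def)
  have space: "space (PiM UNIV M) = UNIV"
    by (auto simp: space_PiM M_def)
  define C where "C = {rho \<in> space (PiM UNIV M). \<forall>n. rho (hP n) = P (Suc n)}"
  have single: "{rho \<in> space (PiM UNIV M). rho h \<in> A} \<in> sets (PiM UNIV M)" for h A
    using sets_Collect_single[of h UNIV A M] by (simp add: M_def)
  have Csets: "C \<in> sets (PiM UNIV M)"
  proof -
    have "{rho \<in> space (PiM UNIV M). rho (hP n) = P (Suc n)} \<in> sets (PiM UNIV M)" for n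
      using single[of "hP n" "{P (Suc n)}"] by simp
    then show ?thesis unfolding C_def by (intro sets.sets_Collect_countable_All) simp
  qed
  define c where "c = max (max (pmf (Pr {} {}) {}) (pmf (Pr {} {}) {0})) (max (pmf (Pr {0} {}) {}) (pmf (Pr {0} {}) {0}))"
  have c1: "c < 1"
  proof -
    have "pmf (Pr {} {}) {} < 1" using pmf_lt1[of "{0}" "Pr {} {}" "{}"] sp[of "{}"] by simp
    moreover have "pmf (Pr {} {}) {0} < 1" using pmf_lt1[of "{}" "Pr {} {}" "{0}"] sp[of "{}"] by simp
    moreover have "pmf (Pr {0} {}) {} < 1" using pmf_lt1[of "{0}" "Pr {0} {}" "{}"] sp[of "{0}"] by simp
    moreover have "pmf (Pr {0} {}) {0} < 1" using pmf_lt1[of "{}" "Pr {0} {}" "{0}"] sp[of "{0}"] by simp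
    ultimately show ?thesis unfolding c_def by simp
  qed
  have c0: "0 \<le> c" unfolding c_def by (simp add: le_max_iff_disj)
  have fac: "pmf (Pr (P n) {}) (P (Suc n)) \<le> c" for n
  proof -
    have a: "P n = {} \<or> P n = {0}" using P_in[of n] by blast
    have b: "P (Suc n) = {} \<or> P (Suc n) = {0}" using P_in[of "Suc n"] by blast
    from a b show ?thesis unfolding c_def by (elim disjE) (simp_all add: le_max_iff_disj)
  qed
  have inj: "inj_on hP A" for A
  proof (rule inj_onI)
    fix x y assume "hP x = hP y"
    then have "length (hP x) = length (hP y)" by simp
    then show "x = y" by simp
  qed
  have bound: "measure (PiM UNIV M) C \<le> c ^ N" for N
  proof -
    define CN where "CN = {x\<in>space (Pi\<^sub>M UNIV M). \<forall>i\<in>hP ` {..<N}. x i \<in> {P (length i)}}"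
    have "C \<subseteq> CN" unfolding C_def CN_def by auto
    have "emeasure (PiM UNIV M) CN = (\<Prod>i\<in>hP ` {..<N}. emeasure (M i) {P (length i)})"
      unfolding CN_def by (rule emeasure_PiM_Collect) (auto simp: M_def)
    also have "\<dots> = (\<Prod>n<N. emeasure (M (hP n)) {P (Suc n)})"
      by (subst prod.reindex[OF inj]) simp
    also have "\<dots> = (\<Prod>n<N. ennreal (pmf (Pr (P n) {}) (P (Suc n))))"
      by (simp add: M_def emeasure_pmf_single f0_def)
    also have "\<dots> = ennreal (\<Prod>n<N. pmf (Pr (P n) {}) (P (Suc n)))"
      by (simp add: prod_ennreal)
    finally have e: "measure (PiM UNIV M) CN = (\<Prod>n<N. pmf (Pr (P n) {}) (P (Suc n)))"
      by (simp add: emeasure_eq_measure prod_nonneg)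
    have "(\<Prod>n<N. pmf (Pr (P n) {}) (P (Suc n))) \<le> (\<Prod>n<N. c)"
      by (rule prod_mono) (simp add: fac)
    then have "measure (PiM UNIV M) CN \<le> c ^ N" using e by simp
    moreover have "measure (PiM UNIV M) C \<le> measure (PiM UNIV M) CN"
    proof (rule finite_measure_mono[OF \<open>C \<subseteq> CN\<close>])
      show "CN \<in> sets (PiM UNIV M)"
        unfolding CN_def
      proof (rule sets.sets_Collect_finite_All)
        fix i show "{x \<in> space (PiM UNIV M). x i \<in> {P (length i)}} \<in> sets (PiM UNIV M)"
          by (rule single)
      qed simp
    qed
    ultimately show ?thesis by linarith
  qed
  have "measure (PiM UNIV M) C \<le> 0"
    by (rule LIMSEQ_le_const[OF LIMSEQ_power_zero[of c]]) (use c0 c1 bound in auto)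
  then have "emeasure (PiM UNIV M) C = 0"
    by (simp add: emeasure_eq_measure measure_nonneg antisym)
  then have Cnull: "C \<in> null_sets (PiM UNIV M)" using Csets by auto
  have AE1: "AE rho in PiM UNIV M. \<forall>n. rho (hP n) \<in> {{},{0}}"
    unfolding AE_all_countable
  proof
    fix n
    show "AE rho in PiM UNIV M. rho (hP n) \<in> {{},{0}}"
    proof (rule AE_component)
      have "AE rho in measure_pmf (Pr (last (hP n)) (f0 (hP n))). rho \<in> set_pmf (Pr (last (hP n)) (f0 (hP n)))"
        by (rule AE_measure_pmf)
      then show "AE rho in M (hP n). rho \<in> {{},{0}}"
        unfolding M_def spM[of n] .
    qed simp
  qed
  have AE2: "AE rho in PiM UNIV M. rho \<notin> C" by (rule AE_not_in[OF Cnull])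
  show "AE rho in induced_chain Pr f0.
           inf_sat (\<lambda>i. last (run_hist D0 rho i)) (\<lambda>i. f0 (run_hist D0 rho i)) psi"
    unfolding ic
    using AE1 AE2
  proof eventually_elim
    case (elim rho)
    show ?case
    proof (rule ccontr)
      assume ns: "\<not> inf_sat (\<lambda>i. last (run_hist D0 rho i)) (\<lambda>i. f0 (run_hist D0 rho i)) psi"
      have alt: "(0 \<in> last (run_hist D0 rho k)) \<noteq> (0 \<in> last (run_hist D0 rho (k+2)))" for k
        using ns unfolding inf_sat_psi f0_def by auto
      have one: "0 \<notin> last (run_hist D0 rho 1)"
        using ns unfolding inf_sat_psi f0_def by auto
      have rh: "run_hist D0 rho n = hP n" for n
        by (rule det_run[OF _ alt one]) (use elim(1) in blast)
      have "rho (hP n) = P (Suc n)" for n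
        using rh[of "Suc n"] rh[of n] by (simp add: hP_Suc)
      then have "rho \<in> C" unfolding C_def space by simp
      then show False using elim by simp
    qed
  qed
qed

theorem proposition3:
  shows "\<exists>(D :: nat domain) f (\<psi> :: nat ltlf).
           planning_domain D \<and> finite_state_policy D f \<and>
           ltlf_atoms \<psi> \<subseteq> fluents D \<union> actions D \<and>
           A_prob1 D f \<psi> \<and>
           \<not> (\<exists>g. is_policy D g \<and> A_sa_fair D g \<psi>)"
proof (intro exI conjI)
  show "ltlf_atoms psi \<subseteq> fluents D0 \<union> actions D0"
    by (simp add: psi_def Or_def TT_def D0_def)
qed (rule pd fsp prob1 no_fair)+

end
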